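(* Let $n$ and $0<n_1<\cdots<n_d<n$ be integers with $m_1=n_1$, $m_k=n_k-n_{k-1}$ ($2\le k\le d$), $m_{d+1}=n-n_d$, and equip $\mathrm{Flag}(n_1,\dots,n_d;n)=\{(VJ_1V^{\mathsf T},\dots,VJ_{d+1}V^{\mathsf T}):V\in\mathrm{O}(n)\}\subseteq(\mathbb{R}^{n\times n})^{d+1}$ with the metric induced by the Frobenius inner product. Let $V_0\in\mathrm{O}(n)$ and $A,B\in\mathfrak{so}(n)$ with $A(k,k)=B(k,k)=0$ for $k=1,\dots,d+1$. Let $V(t)=V_0\exp(tA)$, so that $c(t)=V(t)(J_1,\dots,J_{d+1})V(t)^{\mathsf T}$ is the geodesic through $V_0(J_1,\dots,J_{d+1})V_0^{\mathsf T}$ with initial direction $V_0(AJ_1-J_1A,\dots,AJ_{d+1}-J_{d+1}A)V_0^{\mathsf T}$. Then the parallel transport along $c$ of $Y(0)=V_0(BJ_1-J_1B,\dots,BJ_{d+1}-J_{d+1}B)V_0^{\mathsf T}$ is \[ Y(t)=V(t)\big(X(t)J_1-J_1X(t),\dots,X(t)J_{d+1}-J_{d+1}X(t)\big)V(t)^{\mathsf T}, \] where $X(t)$ solves $\dot X(t)=\tfrac12\,\pi([X(t),A])$, $X(0)=B$.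
   Context: $J_k=\operatorname{diag}(-I_{m_1},\dots,-I_{m_{k-1}},I_{m_k},-I_{m_{k+1}},\dots,-I_{m_{d+1}})$ for $k=1,\dots,d+1$. $V(M_1,\dots,M_{d+1})V^{\mathsf T}$ denotes $(VM_1V^{\mathsf T},\dots,VM_{d+1}V^{\mathsf T})$. For an $n\times n$ matrix $M$, $M(p,q)$ denotes its $(p,q)$ block in the partition $n=m_1+\cdots+m_{d+1}$; for $M\in\mathfrak{so}(n)$, $\pi(M)$ is obtained by setting all diagonal blocks to zero; $[X,A]=XA-AX$. Parallel transport is with respect to the Levi-Civita connection of the induced metric, i.e. $Y$ is parallel iff the orthogonal projection of $\dot Y(t)$ onto $\mathbb{T}_{c(t)}\mathrm{Flag}$ vanishes. *)

theory Defs
  imports "HOL-Analysis.Analysis"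
begin

(* Matrices are real^'n^'n, the index type 'n is finite and linearly ordered;
   the position of index i (0-based) is the number of indices below it. *)
definition pos :: "'n::{finite,linorder} \<Rightarrow> nat" where
  "pos i = card {j. j < i}"

(* ns 0 = 0, ns 1 = n_1, ..., ns d = n_d, ns (d+1) = n.
   blk ns i = k  iff  ns (k-1) \<le> pos i < ns k, i.e. i lies in the k-th block. *)
definition blk :: "(nat \<Rightarrow> nat) \<Rightarrow> 'n::{finite,linorder} \<Rightarrow> nat" where
  "blk ns i = (LEAST k. pos i < ns k)"

definition Jmat :: "(nat \<Rightarrow> nat) \<Rightarrow> nat \<Rightarrow> real^('n::{finite,linorder})^('n::{finite,linorder})" where
  "Jmat ns k = (\<chi> i j. if i = j then (if blk ns i = k then 1 else -1) else 0)"

primrec matpow :: "real^'n^'n \<Rightarrow> nat \<Rightarrow> real^'n^'n" where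
  "matpow A 0 = mat 1"
| "matpow A (Suc m) = matpow A m ** A"

definition mexp :: "real^'n^'n \<Rightarrow> real^'n^'n" where
  "mexp A = (\<Sum>m. (1 / fact m) *\<^sub>R matpow A m)"

definition skew :: "real^'n^'n \<Rightarrow> bool" where
  "skew A \<longleftrightarrow> transpose A = - A"

definition commutator :: "real^'n^'n \<Rightarrow> real^'n^'n \<Rightarrow> real^'n^'n" where
  "commutator X A = X ** A - A ** X"

definition diag_blocks_zero :: "(nat \<Rightarrow> nat) \<Rightarrow> real^('n::{finite,linorder})^('n::{finite,linorder}) \<Rightarrow> bool" where
  "diag_blocks_zero ns M \<longleftrightarrow> (\<forall>i j. blk ns i = blk ns j \<longrightarrow> M $ i $ j = 0)"

definition piblk :: "(nat \<Rightarrow> nat) \<Rightarrow> real^('n::{finite,linorder})^('n::{finite,linorder}) \<Rightarrow> real^('n::{finite,linorder})^('n::{finite,linorder})" where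
  "piblk ns M = (\<chi> i j. if blk ns i = blk ns j then 0 else M $ i $ j)"

(* (d+1)-tuples of matrices are functions on {1..d+1}, zero elsewhere *)
definition tconj :: "nat \<Rightarrow> real^'n^'n \<Rightarrow> (nat \<Rightarrow> real^'n^'n) \<Rightarrow> (nat \<Rightarrow> real^'n^'n)" where
  "tconj d V M = (\<lambda>k. if k \<in> {1..d+1} then V ** M k ** transpose V else 0)"

definition Flag :: "(nat \<Rightarrow> nat) \<Rightarrow> nat \<Rightarrow> (nat \<Rightarrow> real^('n::{finite,linorder})^('n::{finite,linorder})) set" where
  "Flag ns d = {tconj d V (Jmat ns) | V. orthogonal_matrix V}"

(* Frobenius inner product on (R^{n x n})^{d+1}; on real^'n^'n, \<bullet> is the Frobenius product *)
definition tinner :: "nat \<Rightarrow> (nat \<Rightarrow> real^'n^'n) \<Rightarrow> (nat \<Rightarrow> real^'n^'n) \<Rightarrow> real" where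
  "tinner d M N = (\<Sum>k = 1..d+1. M k \<bullet> N k)"

definition thas_deriv :: "nat \<Rightarrow> (real \<Rightarrow> nat \<Rightarrow> real^'n^'n) \<Rightarrow> (nat \<Rightarrow> real^'n^'n) \<Rightarrow> real \<Rightarrow> bool" where
  "thas_deriv d Y Y' t \<longleftrightarrow>
     (\<forall>k \<in> {1..d+1}. ((\<lambda>s. Y s k) has_vector_derivative Y' k) (at t)) \<and>
     (\<forall>k. k \<notin> {1..d+1} \<longrightarrow> Y' k = 0)"

(* tangent space of Flag at p (as embedded submanifold): velocities of curves in Flag through p *)
definition TFlag :: "(nat \<Rightarrow> nat) \<Rightarrow> nat \<Rightarrow> (nat \<Rightarrow> real^('n::{finite,linorder})^('n::{finite,linorder})) \<Rightarrow> (nat \<Rightarrow> real^('n::{finite,linorder})^('n::{finite,linorder})) set" where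
  "TFlag ns d p = {v. \<exists>\<gamma>. (\<forall>t. \<gamma> t \<in> Flag ns d) \<and> \<gamma> 0 = p \<and> thas_deriv d \<gamma> v 0}"

(* Y is a parallel vector field along c (Levi-Civita connection of the induced metric):
   Y(t) is tangent at c(t), Y is differentiable, and the orthogonal projection of
   dY/dt onto the tangent space at c(t) vanishes (i.e. dY/dt is orthogonal to it). *)
definition parallel_along :: "(nat \<Rightarrow> nat) \<Rightarrow> nat \<Rightarrow> (real \<Rightarrow> nat \<Rightarrow> real^('n::{finite,linorder})^('n::{finite,linorder}))
     \<Rightarrow> (real \<Rightarrow> nat \<Rightarrow> real^('n::{finite,linorder})^('n::{finite,linorder})) \<Rightarrow> bool" where
  "parallel_along ns d c Y \<longleftrightarrow>
     (\<forall>t. Y t \<in> TFlag ns d (c t) \<and>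
          (\<exists>Y'. thas_deriv d Y Y' t \<and> (\<forall>w \<in> TFlag ns d (c t). tinner d Y' w = 0)))"

end

theory Submission imports Defs begin


typedef (overloaded) ('n::finite) sqm = "UNIV :: ((real^'n) \<Rightarrow>\<^sub>L (real^'n)) set"
  morphisms sqm_rep sqm_abs by auto

setup_lifting type_definition_sqm

instantiation sqm :: (finite) real_normed_algebra_1
begin
lift_definition zero_sqm :: "'a sqm" is 0 .
lift_definition one_sqm :: "'a sqm" is id_blinfun .
lift_definition plus_sqm :: "'a sqm \<Rightarrow> 'a sqm \<Rightarrow> 'a sqm" is "(+)" .
lift_definition minus_sqm :: "'a sqm \<Rightarrow> 'a sqm \<Rightarrow> 'a sqm" is "(-)" .
lift_definition uminus_sqm :: "'a sqm \<Rightarrow> 'a sqm" is "uminus" .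
lift_definition times_sqm :: "'a sqm \<Rightarrow> 'a sqm \<Rightarrow> 'a sqm" is "(o\<^sub>L)" .
lift_definition scaleR_sqm :: "real \<Rightarrow> 'a sqm \<Rightarrow> 'a sqm" is "scaleR" .
lift_definition norm_sqm :: "'a sqm \<Rightarrow> real" is norm .
definition dist_sqm :: "'a sqm \<Rightarrow> 'a sqm \<Rightarrow> real" where "dist_sqm a b = norm (a - b)"
definition sgn_sqm :: "'a sqm \<Rightarrow> 'a sqm" where "sgn_sqm x = scaleR (inverse (norm x)) x"
definition uniformity_sqm :: "('a sqm \<times> 'a sqm) filter" where
  "uniformity_sqm = (INF e\<in>{0 <..}. principal {(x, y). dist x y < e})"
definition open_sqm :: "'a sqm set \<Rightarrow> bool"
  where "open_sqm S = (\<forall>x\<in>S. \<forall>\<^sub>F (x', y) in uniformity. x' = x \<longrightarrow> y \<in> S)"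
instance
proof
  show "norm (1::'a sqm) = 1" by transfer simp
next
  fix a b c :: "'a sqm" and r s :: real
  show "a * b * c = a * (b * c)" by transfer (auto intro!: blinfun_eqI)
  show "(a + b) * c = a * c + b * c" by transfer (auto intro!: blinfun_eqI simp: blinfun.bilinear_simps)
  show "a * (b + c) = a * b + a * c" by transfer (auto intro!: blinfun_eqI simp: blinfun.bilinear_simps)
  show "r *\<^sub>R a * b = r *\<^sub>R (a * b)" by transfer (auto intro!: blinfun_eqI simp: blinfun.bilinear_simps)
  show "a * r *\<^sub>R b = r *\<^sub>R (a * b)" by transfer (auto intro!: blinfun_eqI simp: blinfun.bilinear_simps)
  show "norm (a * b) \<le> norm a * norm b" by transfer (rule norm_blinfun_compose)
  show "1 * a = a" by transfer (auto intro!: blinfun_eqI)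
  show "a * 1 = a" by transfer (auto intro!: blinfun_eqI)
  show "(0::'a sqm) \<noteq> 1" apply transfer
    by (metis norm_blinfun_id norm_zero zero_neq_one)
qed (unfold dist_sqm_def open_sqm_def sgn_sqm_def uniformity_sqm_def,
     (rule refl | (transfer, force simp: algebra_simps norm_triangle_ineq))+)
end

lemma dist_sqm_rep: "dist x y = dist (sqm_rep x) (sqm_rep y)"
  unfolding dist_sqm_def dist_norm by transfer simp

instance sqm :: (finite) banach
proof
  fix X :: "nat \<Rightarrow> 'a sqm"
  assume "Cauchy X"
  then have "Cauchy (\<lambda>n. sqm_rep (X n))"
    unfolding Cauchy_def dist_sqm_rep by simp
  then obtain L where "(\<lambda>n. sqm_rep (X n)) \<longlonglongrightarrow> L"
    using convergent_def Cauchy_convergent_iff by blast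
  then have "X \<longlonglongrightarrow> sqm_abs L"
    unfolding tendsto_iff dist_sqm_rep by (simp add: sqm_abs_inverse)
  then show "convergent X" by (auto simp: convergent_def)
qed

definition phi :: "real^'n^'n \<Rightarrow> ('n::finite) sqm" where
  "phi M = sqm_abs (Blinfun (\<lambda>x. M *v x))"
definition psi :: "('n::finite) sqm \<Rightarrow> real^'n^'n" where
  "psi x = matrix (blinfun_apply (sqm_rep x))"

lemma lin_rep: "linear (blinfun_apply (sqm_rep x))"
  using blinfun.bounded_linear_right bounded_linear.linear by blast

lemma psi_phi[simp]: "psi (phi M) = M"
  unfolding psi_def phi_def by (simp add: sqm_abs_inverse bounded_linear_Blinfun_apply)

lemma psi_mult: "psi (x * y) = psi x ** psi y"
proof -
  have "psi (x * y) = matrix (blinfun_apply (sqm_rep x) o blinfun_apply (sqm_rep y))"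
    unfolding psi_def times_sqm.rep_eq by (simp add: o_def blinfun_compose.rep_eq)
  also have "\<dots> = psi x ** psi y" unfolding psi_def by (rule matrix_compose[OF lin_rep lin_rep])
  finally show ?thesis .
qed

lemma psi_one[simp]: "psi 1 = mat 1"
  unfolding psi_def one_sqm.rep_eq by (simp add: matrix_id_mat_1[unfolded id_def])

lemma psi_add: "psi (x + y) = psi x + psi y"
  unfolding psi_def plus_sqm.rep_eq
  by (simp add: matrix_def vec_eq_iff blinfun.bilinear_simps)

lemma psi_scaleR: "psi (r *\<^sub>R x) = r *\<^sub>R psi x"
  unfolding psi_def scaleR_sqm.rep_eq
  by (simp add: matrix_def vec_eq_iff blinfun.bilinear_simps)

lemma phi_scaleR: "phi (r *\<^sub>R M) = r *\<^sub>R phi M"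
proof -
  have "Blinfun ((*v) (r *\<^sub>R M)) = r *\<^sub>R Blinfun ((*v) M)"
    by (rule blinfun_eqI) (simp add: bounded_linear_Blinfun_apply scaleR_matrix_vector_assoc scaleR_blinfun.rep_eq)
  then show ?thesis unfolding phi_def
    by (simp add: scaleR_sqm_def sqm_abs_inverse)
qed

lemma psi_bl: "bounded_linear psi"
proof (rule bounded_linear_intro[where K="real CARD('a) * real CARD('a)"])
  fix x y :: "'a sqm" and r :: real
  show "psi (x + y) = psi x + psi y" by (rule psi_add)
  show "psi (r *\<^sub>R x) = r *\<^sub>R psi x" by (rule psi_scaleR)
  have e: "\<bar>psi x $ i $ j\<bar> \<le> norm x" for i j
  proof -
    have "\<bar>psi x $ i $ j\<bar> = \<bar>blinfun_apply (sqm_rep x) (axis j 1) $ i\<bar>"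
      unfolding psi_def matrix_def by simp
    also have "\<dots> \<le> norm (blinfun_apply (sqm_rep x) (axis j 1))" by (rule component_le_norm_cart)
    also have "\<dots> \<le> norm (sqm_rep x) * norm (axis j (1::real))" by (rule norm_blinfun)
    also have "\<dots> = norm x" by (simp add: norm_sqm.rep_eq)
    finally show ?thesis .
  qed
  have "norm (psi x) \<le> (\<Sum>i\<in>UNIV. norm (psi x $ i))" by (subst norm_vec_def) (rule L2_set_le_sum, simp)
  also have "\<dots> \<le> (\<Sum>i\<in>(UNIV::'a set). \<Sum>j\<in>(UNIV::'a set). \<bar>psi x $ i $ j\<bar>)"
    by (intro sum_mono norm_le_l1_cart)
  also have "\<dots> \<le> (\<Sum>i\<in>(UNIV::'a set). \<Sum>j\<in>(UNIV::'a set). norm x)"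
    by (intro sum_mono e)
  also have "\<dots> = norm x * (real CARD('a) * real CARD('a))" by simp
  finally show "norm (psi x) \<le> norm x * (real CARD('a) * real CARD('a))" .
qed


lemma matpow_comm: "matpow A m ** A = A ** matpow A m"
  by (induction m) (simp_all, metis matrix_mul_assoc)

lemma psi_pow: "psi (phi A ^ m) = matpow A m"
  by (induction m) (simp_all del: power_Suc add: power_Suc2 psi_mult)

lemma mexp_sums: "(\<lambda>m. (1 / fact m) *\<^sub>R matpow A m) sums psi (exp (phi A))"
  using bounded_linear.sums[OF psi_bl exp_converges[of "phi A"]]
  by (simp add: psi_scaleR psi_pow divide_inverse)

lemma mexp_psi: "mexp A = psi (exp (phi A))"
  unfolding mexp_def using mexp_sums sums_unique by metis

lemma phi_zero: "phi 0 = 0"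
  using phi_scaleR[of 0 0] by simp

lemma phi_minus: "phi (- M) = - phi M"
  using phi_scaleR[of "-1" M] by simp

lemma mexp_zero[simp]: "mexp 0 = mat 1"
  by (simp add: mexp_psi phi_zero)

lemma mexp_deriv: "((\<lambda>t. mexp (t *\<^sub>R A)) has_vector_derivative (mexp (t *\<^sub>R A) ** A)) (at t within T)"
proof -
  have "((\<lambda>t. psi (exp (t *\<^sub>R phi A))) has_vector_derivative psi (exp (t *\<^sub>R phi A) * phi A)) (at t within T)"
    by (rule bounded_linear.has_vector_derivative[OF psi_bl exp_scaleR_has_vector_derivative_right])
  then show ?thesis by (simp add: mexp_psi phi_scaleR psi_mult)
qed

lemma mexp_minus1: "mexp (- M) ** mexp M = mat 1"
  by (simp add: mexp_psi phi_minus psi_mult[symmetric] exp_minus_inverse[of "- phi M", simplified])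

lemma mexp_minus2: "mexp M ** mexp (- M) = mat 1"
  by (simp add: mexp_psi phi_minus psi_mult[symmetric] exp_minus_inverse)

lemma transpose_bl: "bounded_linear (transpose :: real^'n^'n \<Rightarrow> real^'n^'n)"
  by (rule linear_conv_bounded_linear[THEN iffD1], rule linearI)
     (simp_all add: transpose_def vec_eq_iff)

lemma matpow_transpose: "transpose (matpow M n) = matpow (transpose M) n"
  by (induction n) (simp_all add: matrix_transpose_mul matpow_comm)

lemma mexp_transpose: "transpose (mexp M) = mexp (transpose M)"
proof -
  have "(\<lambda>m. transpose ((1 / fact m) *\<^sub>R matpow M m)) sums transpose (mexp M)"
    using bounded_linear.sums[OF transpose_bl mexp_sums[of M]] by (simp add: mexp_psi)
  then have "(\<lambda>m. (1 / fact m) *\<^sub>R matpow (transpose M) m) sums transpose (mexp M)"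
    by (simp add: transpose_scalar matpow_transpose)
  then show ?thesis using mexp_sums[of "transpose M"] mexp_psi sums_unique2 by metis
qed

lemma mexp_orth: "skew M \<Longrightarrow> orthogonal_matrix (mexp M)"
  unfolding orthogonal_matrix_def skew_def
  by (simp add: mexp_transpose mexp_minus1 mexp_minus2)



lemma gronwall0:
  fixes S :: "real \<Rightarrow> 'a::real_inner"
  assumes d: "\<And>t. (S has_vector_derivative L (S t)) (at t)" and bl: "bounded_linear L"
    and s0: "S 0 = 0" and t: "t \<ge> 0"
  shows "S t = 0"
proof -
  obtain K where K: "K > 0" "\<And>x. norm (L x) \<le> norm x * K"
    using bounded_linear.pos_bounded[OF bl] by blast
  define g where "g t = S t \<bullet> S t" for t
  have gd: "(g has_real_derivative 2 * (S u \<bullet> L (S u))) (at u)" for u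
  proof -
    have "((\<lambda>t. S t \<bullet> S t) has_vector_derivative (S u \<bullet> L (S u) + L (S u) \<bullet> S u)) (at u)"
      by (rule bounded_bilinear.has_vector_derivative[OF bounded_bilinear_inner d d])
    then show ?thesis unfolding g_def has_real_derivative_iff_has_vector_derivative
      by (simp add: inner_commute)
  qed
  have gb: "2 * (S u \<bullet> L (S u)) \<le> 2 * K * g u" for u
  proof -
    have "S u \<bullet> L (S u) \<le> norm (S u) * norm (L (S u))" by (rule norm_cauchy_schwarz)
    also have "\<dots> \<le> norm (S u) * (norm (S u) * K)" by (rule mult_left_mono[OF K(2) norm_ge_zero])
    also have "\<dots> = K * g u" by (simp add: g_def power2_norm_eq_inner[symmetric] power2_eq_square)
    finally show ?thesis by simp
  qed
  define h where "h t = exp (-(2*K) * t) * g t" for t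
  have hd: "\<exists>y. (h has_real_derivative y) (at u) \<and> y \<le> 0" for u
  proof -
    have e: "((\<lambda>t. exp (-(2*K) * t)) has_real_derivative exp (-(2*K)*u) * (-(2*K))) (at u)"
      by (auto intro!: derivative_eq_intros)
    have "(h has_real_derivative exp (-(2*K)*u) * (-(2*K)) * g u + exp (-(2*K)*u) * (2 * (S u \<bullet> L (S u)))) (at u)"
      unfolding h_def[abs_def] using DERIV_mult[OF e gd] by (simp add: algebra_simps)
    moreover have "exp (-(2*K)*u) * (-(2*K)) * g u + exp (-(2*K)*u) * (2 * (S u \<bullet> L (S u))) \<le> 0"
    proof -
      have "exp (-(2*K)*u) * (2 * (S u \<bullet> L (S u))) \<le> exp (-(2*K)*u) * (2 * K * g u)"
        by (rule mult_left_mono[OF gb]) simp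
      then show ?thesis by (simp add: algebra_simps)
    qed
    ultimately show ?thesis by blast
  qed
  have "h t \<le> h 0" by (rule DERIV_nonpos_imp_nonincreasing[OF t]) (use hd in blast)
  then have "exp (-(2*K) * t) * g t \<le> 0" by (simp add: h_def g_def s0)
  moreover have "g t \<ge> 0" by (simp add: g_def)
  ultimately have "g t = 0" by (metis exp_gt_zero mult_le_0_iff not_le order_antisym_conv)
  then show ?thesis by (simp add: g_def)
qed

lemma gronwall:
  fixes S :: "real \<Rightarrow> 'a::real_inner"
  assumes d: "\<And>t. (S has_vector_derivative L (S t)) (at t)" and bl: "bounded_linear L"
    and s0: "S 0 = 0"
  shows "S t = 0"
proof (cases "t \<ge> 0")
  case True then show ?thesis using gronwall0[OF d bl s0] by blast
next
  case False
  define R where "R u = S (- u)" for u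
  have dR: "(R has_vector_derivative (\<lambda>x. - L x) (R u)) (at u)" for u
  proof -
    have "((S \<circ> uminus) has_vector_derivative ((-1) *\<^sub>R L (S (- u)))) (at u)"
      by (rule vector_diff_chain_at) (auto intro!: derivative_eq_intros d)
    then show ?thesis unfolding R_def[abs_def] by (simp add: o_def)
  qed
  have bl2: "bounded_linear (\<lambda>x. - L x)" using bl by (rule bounded_linear_minus)
  have "R (-t) = 0"
    by (rule gronwall0[of R "\<lambda>x. - L x", OF dR bl2]) (use False s0 in \<open>auto simp: R_def\<close>)
  then show ?thesis by (simp add: R_def)
qed

lemma mm_radd: "(A + B) ** C = A ** C + B ** (C::real^'n^'n)"
  by (vector matrix_matrix_mult_def sum.distrib[symmetric] field_simps)
lemma mm_rdiff: "(A - B) ** C = A ** C - B ** (C::real^'n^'n)"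
  by (vector matrix_matrix_mult_def sum_subtractf[symmetric] field_simps)
lemma mm_ldiff: "C ** (A - B) = C ** A - C ** (B::real^'n^'n)"
  by (vector matrix_matrix_mult_def sum_subtractf[symmetric] field_simps)
lemma mm_runeg: "(- A) ** C = - (A ** (C::real^'n^'n))"
  by (vector matrix_matrix_mult_def sum_negf[symmetric])
lemma mm_lneg: "C ** (- A) = - (C ** (A::real^'n^'n))"
  by (vector matrix_matrix_mult_def sum_negf[symmetric])

lemma mm_bb: "bounded_bilinear ((**) :: real^'n^'n \<Rightarrow> real^'n^'n \<Rightarrow> real^'n^'n)"
  unfolding bilinear_conv_bounded_bilinear[symmetric] bilinear_def
  by (auto intro!: linearI simp: matrix_add_ldistrib mm_radd matrix_scalar_ac scalar_matrix_assoc)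



definition sg :: "(nat \<Rightarrow> nat) \<Rightarrow> nat \<Rightarrow> 'n::{finite,linorder} \<Rightarrow> real" where
  "sg ns k i = (if blk ns i = k then 1 else -1)"

lemma Jmat_nth: "Jmat ns k $ i $ j = (if i = j then sg ns k i else 0)"
  by (simp add: Jmat_def sg_def)

lemma mJ: "(M ** Jmat ns k) $ i $ j = M $ i $ j * sg ns k j"
  by (simp add: matrix_matrix_mult_def Jmat_nth if_distrib cong: if_cong)

lemma Jm: "(Jmat ns k ** M) $ i $ j = sg ns k i * M $ i $ j"
  by (simp add: matrix_matrix_mult_def Jmat_nth if_distrib if_distribR cong: if_cong)

lemma comm_J: "commutator M (Jmat ns k) $ i $ j = M $ i $ j * (sg ns k j - sg ns k i)"
  by (simp add: commutator_def mJ Jm algebra_simps)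

lemma minner: "(M::real^'n^'n) \<bullet> N = (\<Sum>i\<in>UNIV. \<Sum>j\<in>UNIV. M$i$j * N$i$j)"
  by (simp add: inner_vec_def)

lemma Yh_entry:
  "(A ** commutator X (Jmat ns k) - commutator X (Jmat ns k) ** A + commutator P (Jmat ns k)) $ i $ j
    = (\<Sum>m\<in>UNIV. A$i$m * (X$m$j * (sg ns k j - sg ns k m)))
      - (\<Sum>m\<in>UNIV. X$i$m * (sg ns k m - sg ns k i) * A$m$j)
      + P$i$j * (sg ns k j - sg ns k i)"
  by (simp add: matrix_matrix_mult_def comm_J)

lemma core_entry:
  fixes A X :: "real^('n::{finite,linorder})^('n::{finite,linorder})" and i j :: "'n::{finite,linorder}"
  assumes dA: "diag_blocks_zero ns A" and dX: "diag_blocks_zero ns X"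
    and ne: "blk ns i \<noteq> blk ns j"
  defines "Yh \<equiv> \<lambda>k. A ** commutator X (Jmat ns k) - commutator X (Jmat ns k) ** A
           + commutator ((1/2) *\<^sub>R piblk ns (commutator X A)) (Jmat ns k)"
  shows "Yh (blk ns j) $ i $ j - Yh (blk ns i) $ i $ j = 0"
proof -
  let ?a = "blk ns i" and ?b = "blk ns j"
  have sgv: "sg ns ?b j = 1" "sg ns ?a i = 1" "sg ns ?a j = -1" "sg ns ?b i = -1"
    using ne by (auto simp: sg_def)
  have t1: "A$i$m * (X$m$j * (sg ns ?b j - sg ns ?b m)) - A$i$m * (X$m$j * (sg ns ?a j - sg ns ?a m))
      = 2 * (A$i$m * X$m$j)" for m
  proof (cases "blk ns m = ?a")
    case True then show ?thesis using dA by (simp add: diag_blocks_zero_def)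
  next
    case False
    show ?thesis
    proof (cases "blk ns m = ?b")
      case True then show ?thesis using dX by (simp add: diag_blocks_zero_def)
    next
      case False2: False
      then show ?thesis using False sgv by (simp add: sg_def)
    qed
  qed
  have t2: "X$i$m * (sg ns ?b m - sg ns ?b i) * A$m$j - X$i$m * (sg ns ?a m - sg ns ?a i) * A$m$j
      = 2 * (X$i$m * A$m$j)" for m
  proof (cases "blk ns m = ?a")
    case True then show ?thesis using dX by (simp add: diag_blocks_zero_def)
  next
    case False
    show ?thesis
    proof (cases "blk ns m = ?b")
      case True then show ?thesis using dA by (simp add: diag_blocks_zero_def)
    next
      case False2: False
      then show ?thesis using False sgv by (simp add: sg_def)
    qed
  qed
  have "Yh ?b $ i $ j - Yh ?a $ i $ j =
     (\<Sum>m\<in>UNIV. A$i$m * (X$m$j * (sg ns ?b j - sg ns ?b m)) - A$i$m * (X$m$j * (sg ns ?a j - sg ns ?a m)))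
     - (\<Sum>m\<in>UNIV. X$i$m * (sg ns ?b m - sg ns ?b i) * A$m$j - X$i$m * (sg ns ?a m - sg ns ?a i) * A$m$j)
     + ((1/2) *\<^sub>R piblk ns (commutator X A))$i$j * 4"
    unfolding Yh_def Yh_entry sum_subtractf using sgv by simp
  also have "\<dots> = 2 * (\<Sum>m\<in>UNIV. A$i$m * X$m$j) - 2 * (\<Sum>m\<in>UNIV. X$i$m * A$m$j)
       + 2 * (commutator X A) $i$j"
    unfolding t1 t2 sum_distrib_left[symmetric] using ne by (simp add: piblk_def)
  also have "\<dots> = 0"
    by (simp add: commutator_def matrix_matrix_mult_def)
  finally show ?thesis .
qed


lemma core_sum:
  fixes A X :: "real^('n::{finite,linorder})^('n::{finite,linorder})"
  assumes rng: "\<forall>i::'n. blk ns i \<in> {1..d+1}"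
    and dA: "diag_blocks_zero ns A" and dX: "diag_blocks_zero ns X"
    and C2: "\<forall>k\<in>{1..d+1}. Jmat ns k ** W k + W k ** Jmat ns k = 0"
    and C3: "\<forall>k\<in>{1..d+1}. \<forall>l\<in>{1..d+1}. k \<noteq> l \<longrightarrow>
               W k ** (mat 1 + Jmat ns l) + (mat 1 + Jmat ns k) ** W l = 0"
  defines "Yh \<equiv> \<lambda>k. A ** commutator X (Jmat ns k) - commutator X (Jmat ns k) ** A
           + commutator ((1/2) *\<^sub>R piblk ns (commutator X A)) (Jmat ns k)"
  shows "(\<Sum>k=1..d+1. Yh k \<bullet> W k) = 0"
proof -
  have wz: "W k $ i $ j = 0" if k: "k \<in> {1..d+1}" and e: "(blk ns i = k) = (blk ns j = k)" for k i j
  proof -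
    have "(Jmat ns k ** W k + W k ** Jmat ns k) $ i $ j = 0" using C2 k by simp
    then have "sg ns k i * W k $ i $ j + W k $ i $ j * sg ns k j = 0" by (simp add: mJ Jm)
    then show ?thesis using e by (auto simp: sg_def split: if_splits)
  qed
  have wa: "W (blk ns i) $ i $ j = - W (blk ns j) $ i $ j" if ne: "blk ns i \<noteq> blk ns j" for i j
  proof -
    have "(W (blk ns i) ** (mat 1 + Jmat ns (blk ns j)) + (mat 1 + Jmat ns (blk ns i)) ** W (blk ns j)) $ i $ j = 0"
      using C3 rng ne by simp
    then have "W (blk ns i) $ i $ j + W (blk ns i) $ i $ j * sg ns (blk ns j) j
        + W (blk ns j) $ i $ j + sg ns (blk ns i) i * W (blk ns j) $ i $ j = 0"
      by (simp add: matrix_add_ldistrib mm_radd mJ Jm)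
    then show ?thesis by (simp add: sg_def)
  qed
  have entry: "(\<Sum>k\<in>{1..d+1}. Yh k $ i $ j * W k $ i $ j) = 0" for i j
  proof (cases "blk ns i = blk ns j")
    case True then show ?thesis using wz by (intro sum.neutral) auto
  next
    case False
    have "(\<Sum>k\<in>{1..d+1}. Yh k $ i $ j * W k $ i $ j) = (\<Sum>k\<in>{blk ns i, blk ns j}. Yh k $ i $ j * W k $ i $ j)"
      by (rule sum.mono_neutral_right) (use rng wz in auto)
    also have "\<dots> = Yh (blk ns i) $ i $ j * W (blk ns i) $ i $ j + Yh (blk ns j) $ i $ j * W (blk ns j) $ i $ j"
      using False by simp
    also have "\<dots> = (Yh (blk ns j) $ i $ j - Yh (blk ns i) $ i $ j) * W (blk ns j) $ i $ j"
      using wa[OF False] by (simp add: algebra_simps)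
    also have "\<dots> = 0" using core_entry[OF dA dX False] unfolding Yh_def by simp
    finally show ?thesis .
  qed
  have "(\<Sum>k=1..d+1. Yh k \<bullet> W k) = (\<Sum>k\<in>{1..d+1}. \<Sum>i\<in>UNIV. \<Sum>j\<in>UNIV. Yh k $ i $ j * W k $ i $ j)"
    by (simp add: minner)
  also have "\<dots> = (\<Sum>i\<in>UNIV. \<Sum>j\<in>UNIV. \<Sum>k\<in>{1..d+1}. Yh k $ i $ j * W k $ i $ j)"
    by (simp only: sum.swap[where A="{1..d+1}"])
  also have "\<dots> = 0" by (rule sum.neutral, rule ballI, rule sum.neutral, rule ballI, rule entry)
  finally show ?thesis .
qed


lemma inner_trace: "(M::real^'n^'n) \<bullet> N = trace (transpose M ** N)"
  by (simp add: minner trace_def matrix_matrix_mult_def transpose_def) (subst sum.swap, simp)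

lemma conj_inner: "(V ** M ** transpose V) \<bullet> (N::real^'n^'n) = M \<bullet> (transpose V ** N ** V)"
proof -
  have "(V ** M ** transpose V) \<bullet> N = trace (V ** (transpose M ** transpose V ** N))"
    by (simp add: inner_trace matrix_transpose_mul matrix_mul_assoc)
  also have "\<dots> = trace ((transpose M ** transpose V ** N) ** V)" by (rule trace_mul_sym)
  also have "\<dots> = M \<bullet> (transpose V ** N ** V)" by (simp add: inner_trace matrix_mul_assoc)
  finally show ?thesis .
qed

lemma conj_deriv:
  fixes U M :: "real \<Rightarrow> real^'n^'n"
  assumes u: "(U has_vector_derivative U') (at s)" and m: "(M has_vector_derivative M') (at s)"
  shows "((\<lambda>s. U s ** M s ** transpose (U s)) has_vector_derivative
           (U s ** M s ** transpose U' + (U s ** M' + U' ** M s) ** transpose (U s))) (at s)"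
proof -
  have 1: "((\<lambda>s. U s ** M s) has_vector_derivative U s ** M' + U' ** M s) (at s)"
    by (rule bounded_bilinear.has_vector_derivative[OF mm_bb u m])
  have 2: "((\<lambda>s. transpose (U s)) has_vector_derivative transpose U') (at s)"
    by (rule bounded_linear.has_vector_derivative[OF transpose_bl u])
  show ?thesis by (rule bounded_bilinear.has_vector_derivative[OF mm_bb 1 2])
qed

lemma orthL: "orthogonal_matrix U \<Longrightarrow> X ** transpose U ** U = (X::real^'n^'n)"
  by (metis matrix_mul_assoc matrix_mul_rid orthogonal_matrix_def)
lemma orthR: "orthogonal_matrix U \<Longrightarrow> X ** U ** transpose U = (X::real^'n^'n)"
  by (metis matrix_mul_assoc matrix_mul_rid orthogonal_matrix_def)
lemma orth1: "orthogonal_matrix U \<Longrightarrow> transpose U ** U = mat 1"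
  by (simp add: orthogonal_matrix_def)
lemma orth2: "orthogonal_matrix U \<Longrightarrow> U ** transpose U = mat 1"
  by (simp add: orthogonal_matrix_def)

lemma IJm: "((mat 1 + Jmat ns k) ** (M::real^('n::{finite,linorder})^('n::{finite,linorder}))) $ i $ j = (1 + sg ns k i) * M $ i $ j"
  by (subst mm_radd) (simp add: Jm algebra_simps)

lemma JJ: "Jmat ns k ** Jmat ns k = mat 1"
  by (simp add: vec_eq_iff Jm Jmat_nth mat_def sg_def)

lemma IJIJ: assumes "k \<noteq> l" shows "(mat 1 + Jmat ns k) ** (mat 1 + Jmat ns l) = (0::real^('n::{finite,linorder})^('n::{finite,linorder}))"
proof -
  have "((mat 1 + Jmat ns k) ** (mat 1 + Jmat ns l)) $ i $ j = (0::real)" for i j :: 'n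
    by (simp only: IJm) (use assms in \<open>simp add: mat_def Jmat_nth sg_def\<close>)
  then show ?thesis by (simp add: vec_eq_iff)
qed

lemmas mnorm = matrix_mul_assoc matrix_add_ldistrib mm_radd mm_ldiff mm_rdiff mm_lneg mm_runeg
  matrix_transpose_mul

lemma flag_eqs:
  assumes "p \<in> Flag ns d" "k \<in> {1..d+1}" "l \<in> {1..d+1}"
  shows "p k ** p k = mat 1" "k \<noteq> l \<Longrightarrow> (mat 1 + p k) ** (mat 1 + p l) = 0"
proof -
  obtain U where U: "orthogonal_matrix U" "p = tconj d U (Jmat ns)"
    using assms(1) by (auto simp: Flag_def)
  have pk: "p k = U ** Jmat ns k ** transpose U" "p l = U ** Jmat ns l ** transpose U"
    using assms U by (auto simp: tconj_def)
  have "p k ** p k = U ** (Jmat ns k ** Jmat ns k) ** transpose U"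
    unfolding pk by (simp add: mnorm orthL[OF U(1)])
  then show "p k ** p k = mat 1" by (simp add: JJ orth2[OF U(1)])
  assume "k \<noteq> l"
  have "(mat 1 + p k) ** (mat 1 + p l) = U ** ((mat 1 + Jmat ns k) ** (mat 1 + Jmat ns l)) ** transpose U"
    unfolding pk by (simp add: mnorm orthL[OF U(1)] orth2[OF U(1)] algebra_simps)
  then show "(mat 1 + p k) ** (mat 1 + p l) = 0" by (simp add: IJIJ[OF \<open>k \<noteq> l\<close>])
qed


lemma blk_range:
  fixes i :: "'n::{finite,linorder}"
  assumes "ns 0 = 0" "ns (d+1) = CARD('n)"
  shows "blk ns i \<in> {1..d+1}"
proof -
  have "{j. j < i} \<subset> UNIV" by auto
  then have "pos i < CARD('n)" unfolding pos_def by (rule psubset_card_mono[OF finite]) 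
  then have p: "pos i < ns (d+1)" using assms by simp
  have "blk ns i \<le> d+1" unfolding blk_def by (rule Least_le[of "\<lambda>k. pos i < ns k", OF p])
  moreover have "pos i < ns (blk ns i)" unfolding blk_def by (rule LeastI[of "\<lambda>k. pos i < ns k", OF p])
  then have "blk ns i \<noteq> 0" by (metis assms(1) less_nat_zero_code)
  ultimately show ?thesis by auto
qed

lemma piblk_add: "piblk ns (P + Q) = piblk ns P + piblk ns Q"
  by (simp add: vec_eq_iff piblk_def)
lemma piblk_scale: "piblk ns (r *\<^sub>R P) = r *\<^sub>R piblk ns P"
  by (simp add: vec_eq_iff piblk_def)
lemma comm_add: "commutator (P + Q) A = commutator P A + commutator Q (A::real^'n^'n)"
  by (simp add: commutator_def matrix_add_ldistrib mm_radd)
lemma comm_scale: "commutator (r *\<^sub>R P) A = r *\<^sub>R commutator P (A::real^'n^'n)"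
  by (simp add: commutator_def matrix_scalar_ac scalar_matrix_assoc[symmetric] algebra_simps)

lemma L_bl: "bounded_linear (\<lambda>Z. (1/2) *\<^sub>R piblk ns (commutator Z (A::real^('n::{finite,linorder})^('n::{finite,linorder}))))"
  by (rule linear_conv_bounded_linear[THEN iffD1], rule linearI)
     (simp_all add: comm_add comm_scale piblk_add piblk_scale algebra_simps)

lemma L_tr:
  fixes A Z :: "real^('n::{finite,linorder})^('n::{finite,linorder})"
  assumes "skew A"
  shows "transpose (piblk ns (commutator Z A)) = piblk ns (commutator (transpose Z) A)"
proof -
  have a: "A $ x $ y = - A $ y $ x" for x y
  proof -
    have "transpose A $ y $ x = (- A) $ y $ x" using assms by (simp add: skew_def)
    then show ?thesis by (simp add: transpose_def)
  qed
  have t: "Z$k$i * A$k$j - A$i$k * Z$j$k = Z$j$k * A$k$i - A$j$k * Z$k$i" for i j k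
    using a[of k i] a[of j k] by (simp add: algebra_simps)
  show ?thesis
    by (simp add: vec_eq_iff transpose_def piblk_def commutator_def matrix_matrix_mult_def
        sum_subtractf[symmetric] t eq_commute)
qed


theorem corollaryB3:
  fixes ns :: "nat \<Rightarrow> nat" and d :: nat
    and V0 A B :: "real^('n::{finite,linorder})^('n::{finite,linorder})"
    and X :: "real \<Rightarrow> real^('n::{finite,linorder})^('n::{finite,linorder})"
  assumes "d \<ge> 1"
    and "ns 0 = 0" and "ns (d+1) = CARD('n)"
    and "\<forall>k \<le> d. ns k < ns (Suc k)"
    and "orthogonal_matrix V0"
    and "skew A" and "skew B"
    and "diag_blocks_zero ns A" and "diag_blocks_zero ns B"
    and "X 0 = B"
    and "\<forall>t. (X has_vector_derivative ((1/2) *\<^sub>R piblk ns (commutator (X t) A))) (at t)"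
  shows "parallel_along ns d
           (\<lambda>t. tconj d (V0 ** mexp (t *\<^sub>R A)) (Jmat ns))
           (\<lambda>t. tconj d (V0 ** mexp (t *\<^sub>R A)) (\<lambda>k. commutator (X t) (Jmat ns k)))
       \<and> tconj d (V0 ** mexp (0 *\<^sub>R A)) (\<lambda>k. commutator (X 0) (Jmat ns k))
           = tconj d V0 (\<lambda>k. commutator B (Jmat ns k))"
proof -
  note ns0 = assms(2) and nsd = assms(3) and V0o = assms(5) and skA = assms(6) and skB = assms(7)
    and dA = assms(8) and dB = assms(9) and X0 = assms(10) and Xd = assms(11)
  define L where "L Z = (1/2) *\<^sub>R piblk ns (commutator Z A)" for Z
  have Lbl: "bounded_linear L" unfolding L_def[abs_def] by (rule L_bl)
  have Xd': "(X has_vector_derivative L (X t)) (at t)" for t using Xd by (simp add: L_def)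
  have rng: "\<forall>i::'n. blk ns i \<in> {1..d+1}" using blk_range[OF ns0 nsd] by blast
  have At: "transpose A = - A" using skA by (simp add: skew_def)
  have Xsk: "transpose (X t) = - X t" for t
  proof -
    define S where "S t = X t + transpose (X t)" for t
    have "(S has_vector_derivative L (S t)) (at t)" for t
    proof -
      have "(S has_vector_derivative L (X t) + transpose (L (X t))) (at t)"
        unfolding S_def[abs_def]
        by (intro has_vector_derivative_add Xd' bounded_linear.has_vector_derivative[OF transpose_bl])
      moreover have "L (X t) + transpose (L (X t)) = L (S t)"
        unfolding L_def S_def using L_tr[OF skA]
        by (simp add: transpose_scalar comm_add piblk_add algebra_simps)
      ultimately show ?thesis by simp
    qed
    moreover have "S 0 = 0" using skB X0 by (simp add: S_def skew_def)
    ultimately have "S t = 0" using gronwall[OF _ Lbl] by blast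
    then show ?thesis by (simp add: S_def eq_neg_iff_add_eq_0 add.commute)
  qed
  have Xskew: "skew (s *\<^sub>R X t)" for s t by (simp add: skew_def transpose_scalar Xsk)
  have dX: "diag_blocks_zero ns (X t)" for t
    unfolding diag_blocks_zero_def
  proof (intro allI impI)
    fix i j :: 'n assume e: "blk ns i = blk ns j"
    have bl: "bounded_linear (\<lambda>M. (M $ i $ j :: real))"
      by (rule bounded_linear_compose[OF bounded_linear_vec_nth bounded_linear_vec_nth])
    have "((\<lambda>t. X t $ i $ j) has_real_derivative 0) (at u)" for u
      using bounded_linear.has_vector_derivative[OF bl Xd'[of u]] e
      by (simp add: has_real_derivative_iff_has_vector_derivative L_def piblk_def)
    then have "X t $ i $ j = X 0 $ i $ j" by (rule DERIV_isconst_all[rule_format])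
    then show "X t $ i $ j = 0" using dB e X0 by (simp add: diag_blocks_zero_def)
  qed
  define V where "V t = V0 ** mexp (t *\<^sub>R A)" for t
  have skA': "skew (t *\<^sub>R A)" for t using skA by (simp add: skew_def transpose_scalar)
  have Vo: "orthogonal_matrix (V t)" for t
    unfolding V_def by (rule orthogonal_matrix_mul[OF V0o mexp_orth[OF skA']])
  have Vd: "(V has_vector_derivative V t ** A) (at t)" for t
  proof -
    have "((\<lambda>t. V0 ** mexp (t *\<^sub>R A)) has_vector_derivative V0 ** (mexp (t *\<^sub>R A) ** A) + 0 ** mexp (t *\<^sub>R A)) (at t)"
      by (rule bounded_bilinear.has_vector_derivative[OF mm_bb has_vector_derivative_const mexp_deriv])
    then show ?thesis by (simp add: V_def[abs_def] matrix_mul_assoc)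
  qed
  define J where "J = (Jmat ns :: nat \<Rightarrow> ((real,'n) vec, 'n) vec)"
  define R where "R = {1..d+1}"
  have c_eq: "(\<lambda>t. tconj d (V0 ** mexp (t *\<^sub>R A)) (Jmat ns)) = (\<lambda>t. tconj d (V t) J)"
    by (simp add: V_def J_def)
  have Y_eq: "(\<lambda>t. tconj d (V0 ** mexp (t *\<^sub>R A)) (\<lambda>k. commutator (X t) (Jmat ns k)))
      = (\<lambda>t. tconj d (V t) (\<lambda>k. commutator (X t) (J k)))"
    by (simp add: V_def J_def)
  have part1: "tconj d (V t) (\<lambda>k. commutator (X t) (J k)) \<in> TFlag ns d (tconj d (V t) J)" for t
  proof -
    define U where "U s = V t ** mexp (s *\<^sub>R X t)" for s
    have Uo: "orthogonal_matrix (U s)" for s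
      unfolding U_def by (rule orthogonal_matrix_mul[OF Vo mexp_orth[OF Xskew]])
    have U0: "U 0 = V t" by (simp add: U_def)
    have Ud: "(U has_vector_derivative V t ** X t) (at 0)"
    proof -
      have "((\<lambda>s. V t ** mexp (s *\<^sub>R X t)) has_vector_derivative
              V t ** (mexp (0 *\<^sub>R X t) ** X t) + 0 ** mexp (0 *\<^sub>R X t)) (at 0)"
        by (rule bounded_bilinear.has_vector_derivative[OF mm_bb has_vector_derivative_const mexp_deriv])
      then show ?thesis by (simp add: U_def[abs_def])
    qed
    have kd: "((\<lambda>s. U s ** J k ** transpose (U s)) has_vector_derivative
               (V t ** commutator (X t) (J k) ** transpose (V t))) (at 0)" for k
    proof -
      have "((\<lambda>s. U s ** J k ** transpose (U s)) has_vector_derivative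
          (U 0 ** J k ** transpose (V t ** X t) + (U 0 ** 0 + (V t ** X t) ** J k) ** transpose (U 0))) (at 0)"
        by (rule conj_deriv[OF Ud has_vector_derivative_const])
      moreover have "U 0 ** J k ** transpose (V t ** X t) + (U 0 ** 0 + (V t ** X t) ** J k) ** transpose (U 0)
          = V t ** commutator (X t) (J k) ** transpose (V t)"
        by (simp add: U0 mnorm commutator_def Xsk)
      ultimately show ?thesis by simp
    qed
    show ?thesis unfolding TFlag_def
    proof (intro CollectI exI conjI allI)
      show "tconj d (U s) J \<in> Flag ns d" for s
        unfolding Flag_def J_def using Uo by blast
      show "tconj d (U 0) J = tconj d (V t) J" by (simp add: U0)
      show "thas_deriv d (\<lambda>s. tconj d (U s) J) (tconj d (V t) (\<lambda>k. commutator (X t) (J k))) 0"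
        unfolding thas_deriv_def using kd by (simp add: tconj_def)
    qed
  qed
  have part2: "\<exists>Y'. thas_deriv d (\<lambda>t. tconj d (V t) (\<lambda>k. commutator (X t) (J k))) Y' t \<and>
      (\<forall>w \<in> TFlag ns d (tconj d (V t) J). tinner d Y' w = 0)" for t
  proof -
    define Yh where "Yh k = A ** commutator (X t) (J k) - commutator (X t) (J k) ** A
           + commutator ((1/2) *\<^sub>R piblk ns (commutator (X t) A)) (J k)" for k
    define Y' where "Y' k = (if k \<in> {1..d+1} then V t ** Yh k ** transpose (V t) else 0)" for k
    have Cd: "((\<lambda>s. commutator (X s) (J k)) has_vector_derivative commutator (L (X t)) (J k)) (at t)" for k
    proof -
      have "((\<lambda>s. X s ** J k - J k ** X s) has_vector_derivative
         (X t ** 0 + L (X t) ** J k) - (J k ** L (X t) + 0 ** X t)) (at t)"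
        by (intro has_vector_derivative_diff bounded_bilinear.has_vector_derivative[OF mm_bb]
              Xd' has_vector_derivative_const)
      then show ?thesis by (simp add: commutator_def)
    qed
    have kd: "((\<lambda>s. V s ** commutator (X s) (J k) ** transpose (V s)) has_vector_derivative
               V t ** Yh k ** transpose (V t)) (at t)" for k
    proof -
      have "((\<lambda>s. V s ** commutator (X s) (J k) ** transpose (V s)) has_vector_derivative
          (V t ** commutator (X t) (J k) ** transpose (V t ** A) +
           (V t ** commutator (L (X t)) (J k) + (V t ** A) ** commutator (X t) (J k)) ** transpose (V t))) (at t)"
        by (rule conj_deriv[OF Vd Cd])
      moreover have "V t ** commutator (X t) (J k) ** transpose (V t ** A) +
           (V t ** commutator (L (X t)) (J k) + (V t ** A) ** commutator (X t) (J k)) ** transpose (V t)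
          = V t ** Yh k ** transpose (V t)"
        by (simp add: Yh_def L_def mnorm At)
      ultimately show ?thesis by simp
    qed
    have td: "thas_deriv d (\<lambda>t. tconj d (V t) (\<lambda>k. commutator (X t) (J k))) Y' t"
      unfolding thas_deriv_def using kd by (simp add: tconj_def Y'_def)
    have orth: "tinner d Y' w = 0" if w: "w \<in> TFlag ns d (tconj d (V t) J)" for w
    proof -
      obtain \<gamma> where g: "\<forall>s. \<gamma> s \<in> Flag ns d" "\<gamma> 0 = tconj d (V t) J" "thas_deriv d \<gamma> w 0"
        using w unfolding TFlag_def by blast
      have gd: "((\<lambda>s. \<gamma> s k) has_vector_derivative w k) (at 0)" if "k \<in> {1..d+1}" for k
        using g(3) that by (simp add: thas_deriv_def)
      have g0: "\<gamma> 0 k = V t ** J k ** transpose (V t)" if "k \<in> {1..d+1}" for k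
        using g(2) that by (simp add: tconj_def)
      define Wh where "Wh k = transpose (V t) ** w k ** V t" for k
      have C2: "\<forall>k\<in>{1..d+1}. Jmat ns k ** Wh k + Wh k ** Jmat ns k = 0"
      proof
        fix k assume k: "k \<in> {1..d+1}"
        have "((\<lambda>s. \<gamma> s k ** \<gamma> s k) has_vector_derivative (\<gamma> 0 k ** w k + w k ** \<gamma> 0 k)) (at 0)"
          by (rule bounded_bilinear.has_vector_derivative[OF mm_bb gd[OF k] gd[OF k]])
        moreover have "(\<lambda>s. \<gamma> s k ** \<gamma> s k) = (\<lambda>s. mat 1)"
          using flag_eqs(1)[OF g(1)[rule_format] k k] by simp
        then have "((\<lambda>s. \<gamma> s k ** \<gamma> s k) has_vector_derivative 0) (at 0)"
          by (simp only: has_vector_derivative_const)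
        ultimately have "\<gamma> 0 k ** w k + w k ** \<gamma> 0 k = 0"
          by (rule vector_derivative_unique_at)
        then have "transpose (V t) ** (\<gamma> 0 k ** w k + w k ** \<gamma> 0 k) ** V t = 0" by simp
        then show "Jmat ns k ** Wh k + Wh k ** Jmat ns k = 0"
          unfolding g0[OF k] Wh_def J_def
          by (simp add: mnorm orthL[OF Vo] orth1[OF Vo])
      qed
      have C3: "\<forall>k\<in>{1..d+1}. \<forall>l\<in>{1..d+1}. k \<noteq> l \<longrightarrow>
               Wh k ** (mat 1 + Jmat ns l) + (mat 1 + Jmat ns k) ** Wh l = 0"
      proof (intro ballI impI)
        fix k l assume k: "k \<in> {1..d+1}" and l: "l \<in> {1..d+1}" and kl: "k \<noteq> l"
        have a: "((\<lambda>s. mat 1 + \<gamma> s k) has_vector_derivative 0 + w k) (at 0)"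
          by (intro has_vector_derivative_add has_vector_derivative_const gd[OF k])
        have b: "((\<lambda>s. mat 1 + \<gamma> s l) has_vector_derivative 0 + w l) (at 0)"
          by (intro has_vector_derivative_add has_vector_derivative_const gd[OF l])
        have "((\<lambda>s. (mat 1 + \<gamma> s k) ** (mat 1 + \<gamma> s l)) has_vector_derivative
            ((mat 1 + \<gamma> 0 k) ** (0 + w l) + (0 + w k) ** (mat 1 + \<gamma> 0 l))) (at 0)"
          by (rule bounded_bilinear.has_vector_derivative[OF mm_bb a b])
        moreover have "(\<lambda>s. (mat 1 + \<gamma> s k) ** (mat 1 + \<gamma> s l)) = (\<lambda>s. 0)"
          using flag_eqs(2)[OF g(1)[rule_format] k l kl] by simp
        then have "((\<lambda>s. (mat 1 + \<gamma> s k) ** (mat 1 + \<gamma> s l)) has_vector_derivative 0) (at 0)"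
          by (simp only: has_vector_derivative_const)
        ultimately have "(mat 1 + \<gamma> 0 k) ** (0 + w l) + (0 + w k) ** (mat 1 + \<gamma> 0 l) = 0"
          by (rule vector_derivative_unique_at)
        then have z: "transpose (V t) ** ((mat 1 + \<gamma> 0 k) ** w l + w k ** (mat 1 + \<gamma> 0 l)) ** V t = 0"
          by simp
        have "Wh k ** (mat 1 + Jmat ns l) + (mat 1 + Jmat ns k) ** Wh l =
              transpose (V t) ** ((mat 1 + \<gamma> 0 k) ** w l + w k ** (mat 1 + \<gamma> 0 l)) ** V t"
          unfolding g0[OF k] g0[OF l] Wh_def J_def
          by (simp add: mnorm orthL[OF Vo] orth1[OF Vo] orthR[OF Vo])
        then show "Wh k ** (mat 1 + Jmat ns l) + (mat 1 + Jmat ns k) ** Wh l = 0" using z by simp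
      qed
      have "(\<Sum>k=1..d+1. Yh k \<bullet> Wh k) = 0"
        unfolding Yh_def J_def by (rule core_sum[OF rng dA dX C2 C3])
      moreover have "tinner d Y' w = (\<Sum>k=1..d+1. Yh k \<bullet> Wh k)"
        unfolding tinner_def Y'_def Wh_def by (intro sum.cong) (simp_all add: conj_inner)
      ultimately show ?thesis by simp
    qed
    show ?thesis using td orth by blast
  qed
  have "parallel_along ns d (\<lambda>t. tconj d (V t) J) (\<lambda>t. tconj d (V t) (\<lambda>k. commutator (X t) (J k)))"
    unfolding parallel_along_def using part1 part2 by blast
  then show ?thesis unfolding c_eq Y_eq using X0 by simp
qed

end
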